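(* Let $G$ be the set of formal sums $f=\sum_{t}f_t\,t$ over reduced plane trees $t$, with $f_t\in\mathbb{C}$ and $f_{|}=1$ for the single-leaf tree $|$, equipped with the product $$f\circ g=\sum_{t_0}f_{t_0}\sum_{t_1,\dots,t_n}g_{t_1}\cdots g_{t_n}\; t_0\circ(t_1,\dots,t_n),$$ where $n$ is the number of leaves of $t_0$ and $t_1,\dots,t_n$ range over reduced plane trees. Identify each $f\in G$ with the noncommutative series $\sum_t f_t S^t\in\mathbb{C}\langle\langle S_0,S_1,\dots\rangle\rangle$, and write it $f(S_0;\mathbf S)$ with $\mathbf S=(S_1,S_2,\dots)$. Then for all $f,g\in G$, the series of $h=f\circ g$ is $h(S_0;\mathbf S)=f(g;\mathbf S)$, i.e. it is obtained from $\sum_t f_tS^t$ by substituting the series $\sum_t g_tS^t$ for every occurrence of $S_0$.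
   Context: A reduced plane tree is a rooted plane tree in which every internal vertex has at least two children. For a tree $t_0$ with $n$ leaves and trees $t_1,\dots,t_n$, $t_0\circ(t_1,\dots,t_n)$ is the tree obtained by replacing the leaves of $t_0$, from left to right, by $t_1,\dots,t_n$. The monomial $S^t$ is defined by $S^{|}=S_0$ and, if the root of $t$ has children subtrees $t_1,\dots,t_n$ ($n\ge2$), $S^t=S_{n-1}S^{t_1}\cdots S^{t_n}$ (the Polish code of $t$). $\mathbb{C}\langle\langle S_0,S_1,\dots\rangle\rangle$ is the completion of the free associative algebra on the noncommuting variables $S_0,S_1,\dots$ with respect to the degree in $S_0$. *)

theory Defs
  imports Complex_Main
begin

datatype ptree = Leaf | Node "ptree list"

fun reduced :: "ptree \<Rightarrow> bool" where
  "reduced Leaf = True"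
| "reduced (Node ts) = (2 \<le> length ts \<and> (\<forall>t\<in>set ts. reduced t))"

fun nleaves :: "ptree \<Rightarrow> nat" where
  "nleaves Leaf = 1"
| "nleaves (Node ts) = sum_list (map nleaves ts)"

text \<open>graft t0 ts = t0 o (t1,...,tn): replace the leaves of t0, left to right, by ts.\<close>
fun graft :: "ptree \<Rightarrow> ptree list \<Rightarrow> ptree"
and graft_list :: "ptree list \<Rightarrow> ptree list \<Rightarrow> ptree list" where
  "graft Leaf ts = hd ts"
| "graft (Node us) ts = Node (graft_list us ts)"
| "graft_list [] ts = []"
| "graft_list (u # us) ts =
     graft u (take (nleaves u) ts) # graft_list us (drop (nleaves u) ts)"

text \<open>Polish code S^t, letters S_i encoded by the natural number i.\<close>
fun pcode :: "ptree \<Rightarrow> nat list" where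
  "pcode Leaf = [0]"
| "pcode (Node ts) = (length ts - 1) # concat (map pcode ts)"

text \<open>Elements of G: coefficient functions with f_| = 1 (only values on reduced trees matter).\<close>
definition inG :: "(ptree \<Rightarrow> complex) \<Rightarrow> bool" where
  "inG f \<longleftrightarrow> f Leaf = 1"

definition tcomp :: "(ptree \<Rightarrow> complex) \<Rightarrow> (ptree \<Rightarrow> complex) \<Rightarrow> ptree \<Rightarrow> complex" where
  "tcomp f g t = (\<Sum>(t0, ts) \<in> {(t0, ts). reduced t0 \<and> length ts = nleaves t0
        \<and> (\<forall>s\<in>set ts. reduced s) \<and> graft t0 ts = t}.
     f t0 * prod_list (map g ts))"

text \<open>Noncommutative series in S_0,S_1,...: coefficient function on words.\<close>
definition series :: "(ptree \<Rightarrow> complex) \<Rightarrow> nat list \<Rightarrow> complex" where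
  "series f w = (\<Sum>t \<in> {t. reduced t \<and> pcode t = w}. f t)"

text \<open>Substitution of a series G without constant term for every occurrence of S_0 in F:
  coefficient of w in sum_u F_u * (u with each letter 0 replaced by G).\<close>
definition subst0 :: "(nat list \<Rightarrow> complex) \<Rightarrow> (nat list \<Rightarrow> complex) \<Rightarrow> nat list \<Rightarrow> complex" where
  "subst0 F G w = (\<Sum>(u, ws) \<in> {(u, ws). length ws = length u \<and> concat ws = w
        \<and> (\<forall>j<length u. ws ! j \<noteq> [] \<and> (u ! j \<noteq> 0 \<longrightarrow> ws ! j = [u ! j]))}.
     F u * prod_list (map2 (\<lambda>x v. if x = 0 then G v else 1) u ws))"

end

theory Submission
  imports Defs
begin


definition zeros :: "nat list \<Rightarrow> nat" where "zeros u = length (filter (\<lambda>x. x = 0) u)"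

fun fill :: "nat list \<Rightarrow> nat list list \<Rightarrow> nat list list" where
  "fill [] vs = []"
| "fill (x # u) vs = (if x = 0 then hd vs # fill u (tl vs) else [x] # fill u vs)"

fun zs :: "nat list \<Rightarrow> nat list list \<Rightarrow> nat list list" where
  "zs (x # u) (v # ws) = (if x = 0 then v # zs u ws else zs u ws)"
| "zs _ _ = []"

definition RR :: "nat \<Rightarrow> nat list \<Rightarrow> bool" where
  "RR x v = (v \<noteq> [] \<and> (x \<noteq> 0 \<longrightarrow> v = [x]))"

lemma zeros_simps[simp]: "zeros [] = 0" "zeros (x # u) = (if x = 0 then Suc (zeros u) else zeros u)"
  "zeros (u1 @ u2) = zeros u1 + zeros u2"
  by (auto simp: zeros_def)

lemma zeros_concat: "zeros (concat xs) = sum_list (map zeros xs)"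
  by (induction xs) auto

lemma length_fill[simp]: "length (fill u vs) = length u"
  by (induction u arbitrary: vs) auto

lemma fill_append: "fill (u1 @ u2) vs = fill u1 vs @ fill u2 (drop (zeros u1) vs)"
  by (induction u1 arbitrary: vs) (auto simp: drop_Suc)

lemma fill_take: "zeros u \<le> n \<Longrightarrow> fill u (take n vs) = fill u vs"
proof (induction u arbitrary: vs n)
  case Nil then show ?case by simp
next
  case (Cons x u)
  show ?case
  proof (cases "x = 0")
    case True
    then obtain m where n: "n = Suc m" and "zeros u \<le> m" using Cons.prems by (cases n) auto
    then show ?thesis using True Cons.IH[of m "tl vs"]
      by (cases vs) auto
  next
    case False then show ?thesis using Cons by auto
  qed
qed

lemma fill_zs: "list_all2 RR u ws \<Longrightarrow> fill u (zs u ws) = ws"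
  by (induction rule: list_all2_induct) (auto simp: RR_def)

lemma length_zs: "length u = length ws \<Longrightarrow> length (zs u ws) = zeros u"
  by (induction u ws rule: zs.induct) auto

lemma zs_fill: "length vs = zeros u \<Longrightarrow> zs u (fill u vs) = vs"
proof (induction u arbitrary: vs)
  case Nil then show ?case by simp
next
  case (Cons x u) then show ?case by (cases vs) (auto split: if_splits)
qed

lemma all2_fill: "(\<forall>v\<in>set vs. v \<noteq> []) \<Longrightarrow> zeros u \<le> length vs \<Longrightarrow> list_all2 RR u (fill u vs)"
proof (induction u arbitrary: vs)
  case Nil then show ?case by simp
next
  case (Cons x u) then show ?case by (cases vs) (auto simp: RR_def)
qed

lemma prod_zs: "length u = length ws \<Longrightarrow>
  prod_list (map2 (\<lambda>x v. if x = 0 then G v else (1::complex)) u ws) = prod_list (map G (zs u ws))"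
  by (induction u ws rule: zs.induct) auto



lemma zeros_pcode: "reduced t \<Longrightarrow> zeros (pcode t) = nleaves t"
proof (induction t)
  case Leaf then show ?case by simp
next
  case (Node ts)
  then have e: "map (zeros \<circ> pcode) ts = map nleaves ts" by (simp add: map_eq_conv)
  show ?case using Node.prems by (simp add: zeros_concat e del: map_eq_conv)
qed

lemma graft_props:
  "reduced t0 \<Longrightarrow> length ts = nleaves t0 \<Longrightarrow> (\<forall>s\<in>set ts. reduced s) \<Longrightarrow>
     reduced (graft t0 ts) \<and> pcode (graft t0 ts) = concat (fill (pcode t0) (map pcode ts))"
  "(\<forall>u\<in>set us. reduced u) \<Longrightarrow> length ts = sum_list (map nleaves us) \<Longrightarrow> (\<forall>s\<in>set ts. reduced s) \<Longrightarrow>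
     length (graft_list us ts) = length us \<and> (\<forall>t\<in>set (graft_list us ts). reduced t) \<and>
     concat (map pcode (graft_list us ts)) = concat (fill (concat (map pcode us)) (map pcode ts))"
proof (induction t0 ts and us ts rule: graft_graft_list.induct)
  case (1 ts)
  then obtain s where s: "ts = [s]" by (cases ts) auto
  then show ?case using 1(3) by simp
next
  case (2 us ts)
  have "length (graft_list us ts) = length us \<and> (\<forall>t\<in>set (graft_list us ts). reduced t) \<and>
     concat (map pcode (graft_list us ts)) = concat (fill (concat (map pcode us)) (map pcode ts))"
    using 2(2,3,4) by (intro 2(1)) auto
  then show ?case using 2(2) by auto
next
  case (3 ts)
  then show ?case by simp
next
  case (4 u us ts)
  let ?n = "nleaves u"
  have r: "reduced u" "\<forall>u\<in>set us. reduced u" using 4(3) by auto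
  have lt: "length (take ?n ts) = ?n" using 4(4) by simp
  have ld: "length (drop ?n ts) = sum_list (map nleaves us)" using 4(4) by simp
  have st: "\<forall>s\<in>set (take ?n ts). reduced s" using 4(5) by (auto dest: in_set_takeD)
  have sd: "\<forall>s\<in>set (drop ?n ts). reduced s" using 4(5) by (auto dest: in_set_dropD)
  have zu: "zeros (pcode u) = ?n" using r(1) zeros_pcode by simp
  have a: "reduced (graft u (take ?n ts)) \<and> pcode (graft u (take ?n ts)) = concat (fill (pcode u) (map pcode (take ?n ts)))"
    using 4(1)[OF r(1) lt st] .
  have b: "length (graft_list us (drop ?n ts)) = length us \<and> (\<forall>t\<in>set (graft_list us (drop ?n ts)). reduced t) \<and>
     concat (map pcode (graft_list us (drop ?n ts))) = concat (fill (concat (map pcode us)) (map pcode (drop ?n ts)))"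
    using 4(2)[OF r(2) ld sd] .
  have c: "fill (pcode u) (map pcode (take ?n ts)) = fill (pcode u) (map pcode ts)"
    using fill_take[of "pcode u" ?n "map pcode ts"] zu by (simp add: take_map)
  show ?case using a b c zu by (simp add: fill_append drop_map)
qed

lemma pcode_list_inj:
  "\<forall>t\<in>set ts. reduced t \<Longrightarrow> \<forall>t\<in>set ts'. reduced t \<Longrightarrow> length ts = length ts' \<Longrightarrow>
    concat (map pcode ts) @ xs = concat (map pcode ts') @ ys \<Longrightarrow>
   (\<And>t t' xs ys. t \<in> set ts \<Longrightarrow> reduced t \<Longrightarrow> reduced t' \<Longrightarrow> pcode t @ xs = pcode t' @ ys \<Longrightarrow> t = t' \<and> xs = ys) \<Longrightarrow>
   ts = ts' \<and> xs = ys"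
proof (induction ts arbitrary: ts' xs ys)
  case Nil then show ?case by simp
next
  case (Cons t ts)
  from Cons.prems(3) obtain t' ts2 where ts': "ts' = t' # ts2" by (cases ts') auto
  have h: "pcode t @ (concat (map pcode ts) @ xs) = pcode t' @ (concat (map pcode ts2) @ ys)"
    using Cons.prems(4) ts' by simp
  have rt: "reduced t" "reduced t'" using Cons.prems(1,2) ts' by auto
  have "t = t' \<and> concat (map pcode ts) @ xs = concat (map pcode ts2) @ ys"
    using Cons.prems(5)[OF _ rt h] by simp
  then have tt: "t = t'" and rest: "concat (map pcode ts) @ xs = concat (map pcode ts2) @ ys" by auto
  have r1: "\<forall>t\<in>set ts. reduced t" using Cons.prems(1) by simp
  have r2: "\<forall>t\<in>set ts2. reduced t" using Cons.prems(2) ts' by simp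
  have l: "length ts = length ts2" using Cons.prems(3) ts' by simp
  have "ts = ts2 \<and> xs = ys"
    by (rule Cons.IH[OF r1 r2 l rest]) (rule Cons.prems(5), simp_all)
  then show ?case using tt ts' by simp
qed

lemma pcode_app_inj: "reduced t \<Longrightarrow> reduced t' \<Longrightarrow> pcode t @ xs = pcode t' @ ys \<Longrightarrow> t = t' \<and> xs = ys"
proof (induction t arbitrary: t' xs ys)
  case Leaf
  then show ?case by (cases t') auto
next
  case (Node ts)
  then obtain ts' where t': "t' = Node ts'" by (cases t') auto
  have len: "length ts = length ts'" using Node.prems t' by auto
  have "concat (map pcode ts) @ xs = concat (map pcode ts') @ ys" using Node.prems t' by auto
  moreover have "\<forall>t\<in>set ts. reduced t" "\<forall>t\<in>set ts'. reduced t" using Node.prems t' by auto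
  ultimately have "ts = ts' \<and> xs = ys"
    using pcode_list_inj[of ts ts' xs ys] Node.IH len by blast
  then show ?case using t' by simp
qed

lemma pcode_inj: "reduced t \<Longrightarrow> reduced t' \<Longrightarrow> pcode t = pcode t' \<Longrightarrow> t = t'"
  using pcode_app_inj[of t t' "[]" "[]"] by simp

lemma series_pcode: "reduced s \<Longrightarrow> series g (pcode s) = g s"
proof -
  assume r: "reduced s"
  have "{t. reduced t \<and> pcode t = pcode s} = {s}" using pcode_inj r by auto
  then show ?thesis by (simp add: series_def)
qed

lemma pcode_ne: "pcode t \<noteq> []" by (cases t) auto



lemma S_finite:
  "finite {(u, ws). length ws = length u \<and> concat ws = (w::nat list)
        \<and> (\<forall>j<length u. ws ! j \<noteq> [] \<and> (u ! j \<noteq> 0 \<longrightarrow> ws ! j = [u ! j]))}" (is "finite ?S")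
proof -
  let ?A = "{u. set u \<subseteq> insert 0 (set w) \<and> length u \<le> length w}"
  let ?C = "{v. set v \<subseteq> set w \<and> length v \<le> length w}"
  let ?B = "{ws. set ws \<subseteq> ?C \<and> length ws \<le> length w}"
  have fC: "finite ?C" by (rule finite_lists_length_le) simp
  have "finite ?B" by (rule finite_lists_length_le[OF fC])
  moreover have "finite ?A" by (rule finite_lists_length_le) simp
  moreover have "?S \<subseteq> ?A \<times> ?B"
  proof
    fix p assume "p \<in> ?S"
    note pS = this
    obtain u ws where p: "p = (u, ws)" by (cases p)
    have l: "length ws = length u" and c: "concat ws = w"
      and h: "\<forall>j<length u. ws ! j \<noteq> [] \<and> (u ! j \<noteq> 0 \<longrightarrow> ws ! j = [u ! j])"
      using pS unfolding p by simp_all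
    have ne: "\<forall>v\<in>set ws. v \<noteq> []" using h l by (auto simp: in_set_conv_nth)
    have lw: "length ws \<le> length w"
    proof -
      have "length ws \<le> sum_list (map length ws)" using ne
        proof (induction ws)
        case (Cons a ws)
        then have "length a \<ge> 1" by (simp add: Suc_le_eq)
        then show ?case using Cons by simp
      qed simp
      then show ?thesis using c by (metis length_concat)
    qed
    have sv: "\<forall>v\<in>set ws. set v \<subseteq> set w \<and> length v \<le> length w"
    proof
      fix v assume "v \<in> set ws"
      then have "set v \<subseteq> set (concat ws) \<and> length v \<le> length (concat ws)"
        by (auto simp: length_concat elim!: in_set_conv_decomp[THEN iffD1, elim_format])
      then show "set v \<subseteq> set w \<and> length v \<le> length w" using c by simp
    qed
    have su: "set u \<subseteq> insert 0 (set w)"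
    proof
      fix x assume "x \<in> set u"
      then obtain j where j: "j < length u" "u ! j = x" by (auto simp: in_set_conv_nth)
      show "x \<in> insert 0 (set w)"
      proof (cases "x = 0")
        case True then show ?thesis by simp
      next
        case False
        then have wj: "ws ! j = [x]" using h j by auto
        have "ws ! j \<in> set ws" using j l by simp
        then have "set (ws ! j) \<subseteq> set w" using sv by simp
        then show ?thesis using wj by simp
      qed
    qed
    have "ws \<in> ?B" using lw sv by fastforce
    moreover have "u \<in> ?A" using su lw l by simp
    ultimately show "p \<in> ?A \<times> ?B" using p by simp
  qed
  ultimately show ?thesis by (meson finite_SigmaI finite_subset)
qed



theorem mainTheorem7:
  fixes f g :: "ptree \<Rightarrow> complex"
  assumes "inG f" and "inG g"
  shows "series (tcomp f g) = subst0 (series f) (series g)"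
proof (rule ext)
  fix w
  define T where "T = {(t0, ts). reduced t0 \<and> length ts = nleaves t0 \<and> (\<forall>s\<in>set ts. reduced s) \<and> pcode (graft t0 ts) = w}"
  define H where "H = (\<lambda>(t0, ts). f t0 * prod_list (map g ts))"
  have L: "series (tcomp f g) w = sum H T"
  proof (cases "\<exists>t. reduced t \<and> pcode t = w")
    case True
    then obtain t where t: "reduced t" "pcode t = w" by blast
    have "{t. reduced t \<and> pcode t = w} = {t}" using pcode_inj t by auto
    then have "series (tcomp f g) w = tcomp f g t" by (simp add: series_def)
    also have "{(t0, ts). reduced t0 \<and> length ts = nleaves t0
        \<and> (\<forall>s\<in>set ts. reduced s) \<and> graft t0 ts = t} = T"
    proof (rule set_eqI)
      fix p :: "ptree \<times> ptree list"
      obtain t0 ts where p: "p = (t0, ts)" by (cases p)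
      show "p \<in> {(t0, ts). reduced t0 \<and> length ts = nleaves t0
        \<and> (\<forall>s\<in>set ts. reduced s) \<and> graft t0 ts = t} \<longleftrightarrow> p \<in> T"
      proof
        assume "p \<in> {(t0, ts). reduced t0 \<and> length ts = nleaves t0
          \<and> (\<forall>s\<in>set ts. reduced s) \<and> graft t0 ts = t}"
        then show "p \<in> T" using t unfolding p T_def by auto
      next
        assume "p \<in> T"
        then have a: "reduced t0" "length ts = nleaves t0" "\<forall>s\<in>set ts. reduced s" "pcode (graft t0 ts) = w"
          unfolding p T_def by auto
        have "reduced (graft t0 ts)" using graft_props(1)[OF a(1,2,3)] by simp
        then have "graft t0 ts = t" using pcode_inj t a(4) by simp
        then show "p \<in> {(t0, ts). reduced t0 \<and> length ts = nleaves t0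
          \<and> (\<forall>s\<in>set ts. reduced s) \<and> graft t0 ts = t}" using a unfolding p by simp
      qed
    qed
    then have "tcomp f g t = sum H T" unfolding tcomp_def H_def by simp
    finally show ?thesis .
  next
    case False
    then have e: "{t. reduced t \<and> pcode t = w} = {}" by auto
    have "series (tcomp f g) w = 0" by (simp only: series_def e sum.empty)
    moreover have "T = {}"
    proof (rule ccontr)
      assume "T \<noteq> {}"
      then obtain t0 ts where a: "reduced t0" "length ts = nleaves t0" "\<forall>s\<in>set ts. reduced s" "pcode (graft t0 ts) = w"
        unfolding T_def by auto
      have "reduced (graft t0 ts)" using graft_props(1)[OF a(1,2,3)] by simp
      then show False using False a(4) by blast
    qed
    ultimately show ?thesis by simp
  qed
  define S where "S = {(u, ws). length ws = length u \<and> concat ws = w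
        \<and> (\<forall>j<length u. ws ! j \<noteq> [] \<and> (u ! j \<noteq> 0 \<longrightarrow> ws ! j = [u ! j]))}"
  define K where "K = (\<lambda>(u, ws). series f u * prod_list (map2 (\<lambda>x v. if x = 0 then series g v else 1) u ws))"
  define \<phi> where "\<phi> = (\<lambda>(t0, ts). (pcode t0, fill (pcode t0) (map pcode ts)))"
  have Seq: "subst0 (series f) (series g) w = sum K S" unfolding subst0_def S_def K_def by (rule refl)
  have fS: "finite S" unfolding S_def by (rule S_finite)
  have memS: "(u, ws) \<in> S \<longleftrightarrow> concat ws = w \<and> list_all2 RR u ws" for u ws
    unfolding S_def RR_def list_all2_conv_all_nth by auto
  have Tfacts: "pcode (graft t0 ts) = concat (fill (pcode t0) (map pcode ts))
      \<and> zeros (pcode t0) = length (map pcode ts) \<and> list_all2 RR (pcode t0) (fill (pcode t0) (map pcode ts))"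
    if "(t0, ts) \<in> T" for t0 ts
  proof -
    have a: "reduced t0" "length ts = nleaves t0" "\<forall>s\<in>set ts. reduced s"
      using that unfolding T_def by auto
    have z: "zeros (pcode t0) = length (map pcode ts)" using zeros_pcode[OF a(1)] a(2) by simp
    have "list_all2 RR (pcode t0) (fill (pcode t0) (map pcode ts))"
      by (rule all2_fill) (use z pcode_ne in auto)
    then show ?thesis using graft_props(1)[OF a] z by simp
  qed
  have sub: "\<phi> ` T \<subseteq> S"
  proof
    fix x assume "x \<in> \<phi> ` T"
    then obtain t0 ts where tT: "(t0, ts) \<in> T" and x: "x = \<phi> (t0, ts)" by auto
    have "pcode (graft t0 ts) = w" using tT unfolding T_def by simp
    then show "x \<in> S" using Tfacts[OF tT] unfolding x \<phi>_def by (simp add: memS)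
  qed
  have zero: "\<forall>x\<in>S - \<phi> ` T. K x = 0"
  proof (rule ccontr)
    assume "\<not> (\<forall>x\<in>S - \<phi> ` T. K x = 0)"
    then obtain u ws where uS: "(u, ws) \<in> S" and nT: "(u, ws) \<notin> \<phi> ` T" and K0: "K (u, ws) \<noteq> 0" by auto
    have cw: "concat ws = w" and ra: "list_all2 RR u ws" using uS memS by auto
    have lu: "length u = length ws" using ra list_all2_lengthD by blast
    have sf: "series f u \<noteq> 0" and sg: "prod_list (map (series g) (zs u ws)) \<noteq> 0"
      using K0 prod_zs[OF lu, of "series g"] unfolding K_def by auto
    have "{t. reduced t \<and> pcode t = u} \<noteq> {}" using sf unfolding series_def by (metis sum.empty)
    then obtain t0 where t0: "reduced t0" "pcode t0 = u" by auto
    have ex: "\<exists>s. reduced s \<and> pcode s = v" if "v \<in> set (zs u ws)" for v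
    proof -
      have "series g v \<noteq> 0" using sg that by (auto simp: prod_list_zero_iff)
      then have "{t. reduced t \<and> pcode t = v} \<noteq> {}" unfolding series_def by (metis sum.empty)
      then show ?thesis by auto
    qed
    define ts where "ts = map (\<lambda>v. SOME s. reduced s \<and> pcode s = v) (zs u ws)"
    have rs: "reduced (SOME s. reduced s \<and> pcode s = v) \<and> pcode (SOME s. reduced s \<and> pcode s = v) = v"
      if "v \<in> set (zs u ws)" for v using someI_ex[OF ex[OF that]] .
    have mp: "map pcode ts = zs u ws" unfolding ts_def map_map by (rule map_idI) (simp add: rs)
    have rts: "\<forall>s\<in>set ts. reduced s" unfolding ts_def using rs by simp
    have lts: "length ts = nleaves t0"
      using length_zs[OF lu] zeros_pcode[OF t0(1)] t0(2) unfolding ts_def by simp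
    have fl: "fill u (map pcode ts) = ws" using fill_zs[OF ra] mp by simp
    have "pcode (graft t0 ts) = w"
      using graft_props(1)[OF t0(1) lts rts] fl t0(2) cw by simp
    then have "(t0, ts) \<in> T" using t0 rts lts unfolding T_def by simp
    moreover have "\<phi> (t0, ts) = (u, ws)" using fl t0(2) unfolding \<phi>_def by simp
    ultimately show False using nT by (metis imageI)
  qed
  have inj: "inj_on \<phi> T"
  proof (rule inj_onI)
    fix x y assume xT: "x \<in> T" and yT: "y \<in> T" and e: "\<phi> x = \<phi> y"
    obtain t0 ts where x: "x = (t0, ts)" by (cases x)
    obtain t0' ts' where y: "y = (t0', ts')" by (cases y)
    have r: "reduced t0" "reduced t0'" "\<forall>s\<in>set ts. reduced s" "\<forall>s\<in>set ts'. reduced s"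
      using xT yT unfolding x y T_def by simp_all
    have e1: "pcode t0 = pcode t0'" and e2: "fill (pcode t0) (map pcode ts) = fill (pcode t0') (map pcode ts')"
      using e unfolding x y \<phi>_def by auto
    have tt: "t0 = t0'" using pcode_inj[OF r(1,2) e1] .
    have z1: "zeros (pcode t0) = length (map pcode ts)" using Tfacts[of t0 ts] xT x by blast
    have z2: "zeros (pcode t0) = length (map pcode ts')" using Tfacts[of t0' ts'] yT y tt by blast
    have e3: "fill (pcode t0) (map pcode ts) = fill (pcode t0) (map pcode ts')" using e2 tt by simp
    have "map pcode ts = zs (pcode t0) (fill (pcode t0) (map pcode ts))" by (rule zs_fill[OF z1[symmetric], symmetric])
    also have "\<dots> = zs (pcode t0) (fill (pcode t0) (map pcode ts'))" by (simp only: e3)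
    also have "\<dots> = map pcode ts'" by (rule zs_fill[OF z2[symmetric]])
    finally have "map pcode ts = map pcode ts'" .
    moreover have "inj_on pcode (set ts \<union> set ts')"
    proof (rule inj_onI)
      fix a b assume "a \<in> set ts \<union> set ts'" "b \<in> set ts \<union> set ts'" "pcode a = pcode b"
      then show "a = b" using r(3,4) pcode_inj by blast
    qed
    ultimately have "ts = ts'" by (rule map_inj_on)
    then show "x = y" using x y tt by simp
  qed
  have KH: "K (\<phi> p) = H p" if "p \<in> T" for p
  proof -
    obtain t0 ts where p: "p = (t0, ts)" by (cases p)
    have tT: "(t0, ts) \<in> T" using that p by simp
    have a: "reduced t0" "\<forall>s\<in>set ts. reduced s" using tT unfolding T_def by auto
    have F: "pcode (graft t0 ts) = concat (fill (pcode t0) (map pcode ts))"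
      and z: "zeros (pcode t0) = length (map pcode ts)"
      and ra: "list_all2 RR (pcode t0) (fill (pcode t0) (map pcode ts))" using Tfacts[OF tT] by auto
    have "prod_list (map2 (\<lambda>x v. if x = 0 then series g v else 1) (pcode t0) (fill (pcode t0) (map pcode ts)))
        = prod_list (map (series g) (map pcode ts))"
      using prod_zs[of "pcode t0" "fill (pcode t0) (map pcode ts)" "series g"] zs_fill[OF z[symmetric]] by simp
    also have "map (series g) (map pcode ts) = map g ts"
      using a(2) series_pcode by (induction ts) auto
    finally show ?thesis unfolding p K_def H_def \<phi>_def using series_pcode[OF a(1)] by simp
  qed
  have "sum K S = sum K (\<phi> ` T)" by (rule sum.mono_neutral_right[OF fS sub zero])
  also have "\<dots> = sum (K \<circ> \<phi>) T" by (rule sum.reindex[OF inj])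
  also have "\<dots> = sum H T" by (rule sum.cong) (simp_all add: KH)
  finally show "series (tcomp f g) w = subst0 (series f) (series g) w" using L Seq by simp
qed

end
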